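(* Let $0<r_i<r_j$, let $g(\theta)=\dfrac{r_ir_j\sin\theta}{(r_i^2+r_j^2-2r_ir_j\cos\theta)^{3/2}}$, and let $\theta_{ij}\in(0,\pi)$ be defined by \[\cos\theta_{ij}=\frac{-r_i^2-r_j^2+\sqrt{r_i^4+14r_i^2r_j^2+r_j^4}}{2r_ir_j}\in(0,1).\] Then for $\theta\in[0,\pi]$: if $\cos\theta\in(\cos\theta_{ij},1)$ then \[ g'(\theta)< g'(0)\,\frac{\cos\theta-\cos\theta_{ij}}{1-\cos\theta_{ij}},\] and if $\cos\theta\in(-1,\cos\theta_{ij})$ then \[ g'(\theta)< g'(\pi)\,\frac{\cos\theta-\cos\theta_{ij}}{-1-\cos\theta_{ij}}.\] *)

theory Defs
  imports "HOL-Analysis.Analysis"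
begin

definition g_fun :: "real \<Rightarrow> real \<Rightarrow> real \<Rightarrow> real" where
  "g_fun ri rj \<theta> = ri * rj * sin \<theta> / (ri\<^sup>2 + rj\<^sup>2 - 2 * ri * rj * cos \<theta>) powr (3/2)"

definition theta_crit :: "real \<Rightarrow> real \<Rightarrow> real" where
  "theta_crit ri rj = arccos ((- ri\<^sup>2 - rj\<^sup>2 + sqrt (ri^4 + 14 * ri\<^sup>2 * rj\<^sup>2 + rj^4)) / (2 * ri * rj))"

end

theory Submission
  imports Defs
begin


lemma alg:
  fixes a b c s S :: real
  assumes S: "S > 0" and DS: "a^2+b^2-2 * a * b * c = S^2" and sc: "s^2 = 1 - c^2"
  shows "((a * b * c)  *  (S^2  *  S) - (a  *  b  *  s)  *  ((2 * a * b  *  s)  *  S + S^2  *  ((2 * a * b  *  s) / (2  *  S)))) / ((S^2  *  S)  *  (S^2  *  S))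
     = a * b * (a * b * c^2 + (a^2+b^2) * c - 3 * a * b) / ((S^2)^2  *  S)"
proof -
  have "((a * b * c)  *  (S^2  *  S) - (a  *  b  *  s)  *  ((2 * a * b  *  s)  *  S + S^2  *  ((2 * a * b  *  s) / (2  *  S))))
      = S  *  (a * b * c * S^2 - 3 * a^2 * b^2 * s^2)" using S by (simp add: field_simps power2_eq_square)
  also have "a * b * c * S^2 - 3 * a^2 * b^2 * s^2 = a * b * (a * b * c^2 + (a^2+b^2) * c - 3 * a * b)"
    unfolding DS[symmetric] sc by (simp add: algebra_simps power2_eq_square)
  finally have eq: "((a * b * c) * (S^2 * S) - (a * b * s) * ((2 * a * b * s) * S + S^2 * ((2 * a * b * s) / (2 * S)))) = S * (a * b * (a * b * c^2 + (a^2+b^2) * c - 3 * a * b))" .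
  have gen: "S * Z / ((S^2 * S) * (S^2 * S)) = Z / ((S^2)^2 * S)" for Z using S by (simp add: field_simps power2_eq_square)
  show ?thesis unfolding eq gen ..
qed

lemma gder:
  fixes a b t :: real assumes "0<a" "a<b"
  shows "(g_fun a b has_real_derivative a*b*(a*b*(cos t)^2 + (a^2+b^2)*cos t - 3*a*b) / ((a^2+b^2-2*a*b*cos t)^2 * sqrt (a^2+b^2-2*a*b*cos t))) (at t)"
proof -
  define D where "D x = a^2+b^2-2*a*b*cos x" for x
  have D: "D x > 0" for x
  proof -
    have "a*b*cos x \<le> a*b" using assms by (simp add: mult_left_le)
    moreover have "(b-a)^2 > 0" using assms by simp
    ultimately show ?thesis by (simp add: D_def power2_diff algebra_simps)
  qed
  have pw: "y powr (3/2) = y * sqrt y" if "y > 0" for y :: real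
  proof -
    have "y powr (3/2) = y powr (1 + 1/2)" by simp
    also have "\<dots> = y powr 1 * y powr (1/2)" by (rule powr_add)
    also have "\<dots> = y * sqrt y" using that by (simp add: powr_half_sqrt)
    finally show ?thesis .
  qed
  have geq: "g_fun a b = (\<lambda>x. a * b * sin x / (D x * sqrt (D x)))"
    by (rule ext) (simp add: g_fun_def pw D D_def[symmetric])
  have dD: "(D has_real_derivative 2*a*b* sin t) (at t)"
    unfolding D_def[abs_def] by (auto intro!: derivative_eq_intros)
  have dS: "((\<lambda>x. sqrt (D x)) has_real_derivative (2*a*b* sin t) / (2 * sqrt (D t))) (at t)"
    by (rule DERIV_cong[OF DERIV_chain2[OF DERIV_real_sqrt[OF D[of t]] dD]]) (simp add: field_simps)
  have dP: "((\<lambda>x. D x * sqrt (D x)) has_real_derivative (2*a*b* sin t) * sqrt (D t) + D t * ((2*a*b* sin t) / (2 * sqrt (D t)))) (at t)"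
    by (rule DERIV_cong[OF DERIV_mult[OF dD dS]]) simp
  have dN: "((\<lambda>x. a * b * sin x) has_real_derivative a*b*cos t) (at t)"
    by (auto intro!: derivative_eq_intros)
  have Dt: "D t > 0" "sqrt (D t) > 0" using D by auto
  have q: "D t * sqrt (D t) \<noteq> 0" using Dt by simp
  have "(g_fun a b has_real_derivative ((a*b*cos t) * (D t * sqrt (D t)) - (a*b* sin t) * ((2*a*b* sin t) * sqrt (D t) + D t * ((2*a*b* sin t) / (2 * sqrt (D t))))) / ((D t * sqrt (D t)) * (D t * sqrt (D t)))) (at t)"
    unfolding geq by (rule DERIV_cong[OF DERIV_divide[OF dN dP q]]) simp
    moreover have "((a*b*cos t) * (D t * sqrt (D t)) - (a * b * sin t) * ((2*a*b * sin t) * sqrt (D t) + D t * ((2*a*b * sin t) / (2 * sqrt (D t))))) / ((D t * sqrt (D t)) * (D t * sqrt (D t)))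
     = a*b*(a*b*(cos t)^2 + (a^2+b^2)*cos t - 3*a*b) / ((D t)^2 * sqrt (D t))"
  proof -
    have gen: "((a*b*cos t) * (X * S) - (a * b * sin t) * ((2*a*b * sin t) * S + X * ((2*a*b * sin t) / (2 * S)))) / ((X * S) * (X * S))
     = a*b*(a*b*(cos t)^2 + (a^2+b^2)*cos t - 3*a*b) / (X^2 * S)" if XS: "X = S^2" "S > 0" "X = D t" for X S
    proof -
      have sc: "(sin t)^2 = 1 - (cos t)^2" by (simp add: sin_squared_eq)
      have DS: "a^2+b^2-2 * a * b * cos t = S^2" using XS D_def by simp
      show ?thesis using alg[OF XS(2) DS sc] XS(1) by simp
    qed
    show ?thesis using Dt by (intro gen) auto
  qed
  ultimately show ?thesis by (simp add: D_def)
qed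

lemma main_ineq:
  fixes a b :: real and h :: "real \<Rightarrow> real"
  assumes a: "0 < a" and ab: "a < b"
  and hdef: "\<And>c. h c = a * b * (a * b * c^2 + (a^2+b^2) * c - 3 * a * b) / ((a^2+b^2-2 * a * b * c)^2 * sqrt (a^2+b^2-2 * a * b * c))"
  and c0def: "c0 = (- a\<^sup>2 - b\<^sup>2 + sqrt (a^4 + 14 * a\<^sup>2 * b\<^sup>2 + b^4)) / (2 * a * b)"
  shows "0 < c0" "c0 < 1"
    "\<And>c. c0 < c \<Longrightarrow> c < 1 \<Longrightarrow> h c < h 1 * ((c - c0) / (1 - c0))"
    "\<And>c. -1 < c \<Longrightarrow> c < c0 \<Longrightarrow> h c < h (-1) * ((c - c0) / (-1 - c0))"
proof -
  define s where "s = sqrt (a^4 + 14 * a\<^sup>2 * b\<^sup>2 + b^4)"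
  have b: "0 < b" using a ab by simp
  have abp: "0 < a * b" using a b by simp
  have s0: "s \<ge> 0" unfolding s_def by simp
  have ss: "s^2 = a^4 + 14 * a\<^sup>2 * b\<^sup>2 + b^4" unfolding s_def
    by (simp add: add_nonneg_nonneg)
  have sq4: "(a^2+b^2)^2 = a^4 + 2 * a^2 * b^2 + b^4" by algebra
  have "0 < a^2 * b^2" using a b by simp
  then have l1: "(a^2+b^2)^2 < s^2" using ss sq4 by simp
  have "a^2+b^2 < s" using l1 s0 by (smt (verit) power_mono)
  then show c0p: "0 < c0" unfolding c0def s_def[symmetric] using abp by (simp add: divide_pos_pos)
  have "(b - a)^2 > 0" using ab by simp
  then have "0 < 4 * (a * b) * (b - a)^2" using abp by simp
  moreover have "((a+b)^2)^2 - s^2 = 4 * (a * b) * (b - a)^2" using ss by algebra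
  ultimately have "s^2 < ((a+b)^2)^2" by simp
  then have "s < (a+b)^2" using s0 by (smt (verit) power_mono zero_le_power2)
  then show c01: "c0 < 1" unfolding c0def s_def[symmetric] using abp
    by (simp add: divide_less_eq power2_eq_square algebra_simps)
  define c1 where "c1 = - (a^2+b^2)/(a * b) - c0"
  have root: "a * b * c0^2 + (a^2+b^2) * c0 - 3 * a * b = 0"
  proof -
    have hu: "2 * a * b * c0 = s - a^2 - b^2" unfolding c0def s_def[symmetric] using a b by (simp add: field_simps)
    have "4 * (a * b) * (a * b * c0^2 + (a^2+b^2) * c0 - 3 * a * b) = 0" using hu ss by algebra
    then show ?thesis using a b by simp
  qed
  have fac: "a * b * c^2 + (a^2+b^2) * c - 3 * a * b = a * b * ((c - c0) * (c - c1))" for c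
  proof -
    have "a * b * ((c - c0) * (c - c1)) = a * b * c^2 + (a^2+b^2) * c - (a * b * c0^2 + (a^2+b^2) * c0)"
      unfolding c1_def using a b by (simp add: field_simps power2_eq_square)
    then show ?thesis using root by simp
  qed
  have "2 * (a * b) \<le> a^2 + b^2" using sum_squares_bound[of a b] by (simp add: algebra_simps)
  then have "2 \<le> (a^2+b^2)/(a * b)" using abp by (simp add: le_divide_eq)
  then have c1l: "c1 < -1" unfolding c1_def using c0p by (smt (verit) minus_divide_left)
  define E where "E c = (a^2+b^2-2 * a * b * c)^2 * sqrt (a^2+b^2-2 * a * b * c)" for c
  have Dp: "a^2+b^2-2 * a * b * c > 0" if "c \<le> 1" for c
  proof -
    have "a * b * c \<le> a * b" using abp that by (simp add: mult_left_le)
    moreover have "(b-a)^2 > 0" using ab by simp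
    ultimately show ?thesis by (simp add: power2_diff algebra_simps)
  qed
  have Ep: "E c > 0" if "c \<le> 1" for c using Dp[OF that] unfolding E_def by simp
  have Emono: "E y < E x" if "x < y" "y \<le> 1" for x y
  proof -
    have 1: "a^2+b^2-2 * a * b * y < a^2+b^2-2 * a * b * x" using that abp by (simp add: mult_strict_left_mono)
    have 2: "0 < a^2+b^2-2 * a * b * y" using Dp that by simp
    show ?thesis unfolding E_def
      using 1 2 by (intro mult_strict_mono power_strict_mono) auto
  qed
  define q where "q c = (c - c1) / E c" for c
  have qmono: "q x < q y" if "-1 \<le> x" "x < y" "y \<le> 1" for x y
  proof -
    have "0 < x - c1" "x - c1 < y - c1" using that c1l by auto
    moreover have "0 < E y" "E y < E x" using Ep Emono that by auto
    ultimately show ?thesis unfolding q_def by (intro frac_less2) auto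
  qed
  have hq: "h c = (a * b)^2 * ((c - c0) * q c)" for c
    unfolding hdef fac q_def E_def by (simp add: power2_eq_square)
  show "h c < h 1 * ((c - c0) / (1 - c0))" if "c0 < c" "c < 1" for c
  proof -
    have "q c < q 1" using qmono that c0p by auto
    then have "(c - c0) * q c < (c - c0) * q 1" using that by simp
    then have "h c < (a * b)^2 * ((c - c0) * q 1)" unfolding hq by (rule mult_strict_left_mono) (use abp in auto)
    also have "\<dots> = h 1 * ((c - c0) / (1 - c0))" unfolding hq using c01 by (simp add: field_simps)
    finally show ?thesis .
  qed
  show "h c < h (-1) * ((c - c0) / (-1 - c0))" if "-1 < c" "c < c0" for c
  proof -
    have "q (-1) < q c" using qmono that c01 by auto
    then have "(c - c0) * q c < (c - c0) * q (-1)" using that by simp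
    then have "h c < (a * b)^2 * ((c - c0) * q (-1))" unfolding hq by (rule mult_strict_left_mono) (use abp in auto)
    also have "\<dots> = h (-1) * ((c - c0) / (-1 - c0))" unfolding hq using c0p by (simp add: field_simps)
    finally show ?thesis .
  qed
qed
theorem lemma2p4:
  fixes ri rj \<theta> :: real
  assumes "0 < ri" and "ri < rj" and "0 \<le> \<theta>" and "\<theta> \<le> pi"
  shows "(cos \<theta> \<in> {cos (theta_crit ri rj)<..<1} \<longrightarrow>
           deriv (g_fun ri rj) \<theta> < deriv (g_fun ri rj) 0 *
             ((cos \<theta> - cos (theta_crit ri rj)) / (1 - cos (theta_crit ri rj))))
       \<and> (cos \<theta> \<in> {-1<..<cos (theta_crit ri rj)} \<longrightarrow>
           deriv (g_fun ri rj) \<theta> < deriv (g_fun ri rj) pi *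
             ((cos \<theta> - cos (theta_crit ri rj)) / (-1 - cos (theta_crit ri rj))))"
proof -
  define h where "h c = ri * rj * (ri * rj * c^2 + (ri^2+rj^2) * c - 3 * ri * rj) / ((ri^2+rj^2-2 * ri * rj * c)^2 * sqrt (ri^2+rj^2-2 * ri * rj * c))" for c
  define c0 where "c0 = (- ri\<^sup>2 - rj\<^sup>2 + sqrt (ri^4 + 14 * ri\<^sup>2 * rj\<^sup>2 + rj^4)) / (2 * ri * rj)"
  note M = main_ineq[OF assms(1,2) h_def c0_def]
  have hd: "deriv (g_fun ri rj) x = h (cos x)" for x
    unfolding h_def by (rule DERIV_imp_deriv[OF gder[OF assms(1,2)]])
  have cc: "cos (theta_crit ri rj) = c0"
    unfolding theta_crit_def c0_def[symmetric] using M(1,2) by (intro cos_arccos) auto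
  show ?thesis unfolding hd cc using M(3,4) by simp
qed

end
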